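(* Let $r\in\mathcal{Q}'(1)$ and suppose $r$ contains a pure term, i.e. a monomial $z^k$ or $\overline z^k$ with $k\ge1$ and nonzero coefficient. Then $r(0,0)>0$.
   Context: $\mathcal{Q}'(1)$: Hermitian symmetric polynomials $r(z,\overline z)=\sum c_{jk}z^j\overline z^k$ ($c_{jk}=\overline{c_{kj}}$) in one complex variable with $r(z,\overline z)\ge0$ for all $z$ for which there exist a Hermitian symmetric polynomial $s\ge0$, not identically $0$, and a holomorphic polynomial mapping $F$ with $rs=\|F\|^2$. *)

theory Defs
  imports "HOL-Analysis.Analysis" "HOL-Computational_Algebra.Polynomial"
begin

text \<open>A polynomial in z and conj z is given by its coefficient function
  c j k (coefficient of z^j conj(z)^k), which must have finite support.\<close>

definition bipoly :: "(nat \<Rightarrow> nat \<Rightarrow> complex) \<Rightarrow> bool" where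
  "bipoly c \<longleftrightarrow> finite {(j, k). c j k \<noteq> 0}"

definition herm_sym :: "(nat \<Rightarrow> nat \<Rightarrow> complex) \<Rightarrow> bool" where
  "herm_sym c \<longleftrightarrow> bipoly c \<and> (\<forall>j k. c j k = cnj (c k j))"

definition heval :: "(nat \<Rightarrow> nat \<Rightarrow> complex) \<Rightarrow> complex \<Rightarrow> complex" where
  "heval c z = (\<Sum>(j, k) \<in> {(j, k). c j k \<noteq> 0}. c j k * z ^ j * cnj z ^ k)"

definition nonneg_herm :: "(nat \<Rightarrow> nat \<Rightarrow> complex) \<Rightarrow> bool" where
  "nonneg_herm c \<longleftrightarrow> herm_sym c \<and> (\<forall>z. Im (heval c z) = 0 \<and> Re (heval c z) \<ge> 0)"

definition sqnorm :: "complex poly list \<Rightarrow> complex \<Rightarrow> real" where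
  "sqnorm F z = (\<Sum>f\<leftarrow>F. (cmod (poly f z))\<^sup>2)"

definition Qprime1 :: "(nat \<Rightarrow> nat \<Rightarrow> complex) set" where
  "Qprime1 = {r. nonneg_herm r \<and>
      (\<exists>s F. nonneg_herm s \<and> (\<exists>z. heval s z \<noteq> 0) \<and>
             (\<forall>z. heval r z * heval s z = complex_of_real (sqnorm F z)))}"

end

theory Submission
  imports Defs
begin


inductive jpi :: "(complex \<Rightarrow> complex \<Rightarrow> complex) \<Rightarrow> bool" where
  jc: "jpi (\<lambda>z w. c)"
| jz: "jpi (\<lambda>z w. z)"
| jw: "jpi (\<lambda>z w. w)"
| jadd: "jpi P \<Longrightarrow> jpi Q \<Longrightarrow> jpi (\<lambda>z w. P z w + Q z w)"
| jmul: "jpi P \<Longrightarrow> jpi Q \<Longrightarrow> jpi (\<lambda>z w. P z w * Q z w)"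

lemma jpi_comp:
  assumes "jpi P" "jpi A" "jpi B"
  shows "jpi (\<lambda>z w. P (A z w) (B z w))"
  using assms(1)
proof (induction rule: jpi.induct)
  case (jc c) show ?case by (rule jpi.jc)
next
  case jz show ?case using assms(2) by simp
next
  case jw show ?case using assms(3) by simp
next
  case (jadd P Q) show ?case using jadd.IH by (rule jpi.jadd)
next
  case (jmul P Q) show ?case using jmul.IH by (rule jpi.jmul)
qed

lemma jpi_swap: "jpi P \<Longrightarrow> jpi (\<lambda>z w. P w z)"
  using jpi_comp[OF _ jw jz] by blast

lemma jpi_w0: "jpi P \<Longrightarrow> jpi (\<lambda>z w. P z 0)"
  using jpi_comp[OF _ jz jc] by blast

lemma jpi_minus: assumes "jpi P" "jpi Q" shows "jpi (\<lambda>z w. P z w - Q z w)"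
proof -
  have "jpi (\<lambda>z w. P z w + (-1) * Q z w)" by (intro jadd jmul jc assms)
  thus ?thesis by simp
qed

lemma jpi_sum: "finite A \<Longrightarrow> (\<forall>a\<in>A. jpi (f a)) \<Longrightarrow> jpi (\<lambda>z w. \<Sum>a\<in>A. f a z w)"
proof (induction A rule: finite_induct)
  case empty then show ?case using jc[of 0] by simp
next
  case (insert x F)
  have "jpi (\<lambda>z w. f x z w + (\<Sum>a\<in>F. f a z w))"
    using insert by (intro jadd) auto
  then show ?case using insert by simp
qed

lemma jpi_pow: "jpi P \<Longrightarrow> jpi (\<lambda>z w. P z w ^ n)"
proof (induction n)
  case 0 then show ?case using jc[of 1] by simp
next
  case (Suc n)
  have "jpi (\<lambda>z w. P z w * P z w ^ n)" using Suc by (intro jmul) auto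
  then show ?case by simp
qed

lemma jpi_poly_z: "jpi (\<lambda>z w. poly p z)"
proof -
  have "jpi (\<lambda>z w. \<Sum>i\<le>degree p. coeff p i * z ^ i)"
    by (intro jpi_sum ballI jmul jc jpi_pow jz) auto
  then show ?thesis by (simp add: poly_altdef)
qed

lemma jpi_poly_w: "jpi (\<lambda>z w. poly p w)"
  using jpi_swap[OF jpi_poly_z[of p]] by simp

lemma jpi_adj: "jpi P \<Longrightarrow> jpi (\<lambda>z w. cnj (P (cnj w) (cnj z)))"
proof (induction rule: jpi.induct)
  case (jc c) show ?case by (rule jpi.jc)
next
  case jz show ?case by (simp add: jpi.jw)
next
  case jw show ?case by (simp add: jpi.jz)
next
  case (jadd P Q)
  have "jpi (\<lambda>z w. cnj (P (cnj w) (cnj z)) + cnj (Q (cnj w) (cnj z)))"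
    using jadd.IH by (rule jpi.jadd)
  then show ?case by simp
next
  case (jmul P Q)
  have "jpi (\<lambda>z w. cnj (P (cnj w) (cnj z)) * cnj (Q (cnj w) (cnj z)))"
    using jmul.IH by (rule jpi.jmul)
  then show ?case by simp
qed

lemma jpi_deg: "jpi P \<Longrightarrow> \<exists>d. \<forall>z. \<exists>p. degree p \<le> d \<and> (\<forall>w. P z w = poly p w)"
proof (induction rule: jpi.induct)
  case (jc c) show ?case by (rule exI[of _ 0], auto intro!: exI[of _ "[:c:]"])
next
  case jz show ?case
    by (rule exI[of _ 0], rule allI, rule_tac x="[:z:]" in exI) simp
next
  case jw show ?case
    by (rule exI[of _ 1], rule allI, rule exI[of _ "[:0,1:]"]) simp
next
  case (jadd P Q)
  obtain d1 where d1: "\<forall>z. \<exists>p. degree p \<le> d1 \<and> (\<forall>w. P z w = poly p w)" using jadd.IH by blast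
  obtain d2 where d2: "\<forall>z. \<exists>p. degree p \<le> d2 \<and> (\<forall>w. Q z w = poly p w)" using jadd.IH by blast
  show ?case
  proof (rule exI[of _ "max d1 d2"], rule allI)
    fix z
    obtain p1 where p1: "degree p1 \<le> d1" "\<forall>w. P z w = poly p1 w" using d1 by blast
    obtain p2 where p2: "degree p2 \<le> d2" "\<forall>w. Q z w = poly p2 w" using d2 by blast
    show "\<exists>p. degree p \<le> max d1 d2 \<and> (\<forall>w. P z w + Q z w = poly p w)"
      apply (rule exI[of _ "p1 + p2"])
      using p1 p2 degree_add_le[of p1 "max d1 d2" p2] by auto
  qed
next
  case (jmul P Q)
  obtain d1 where d1: "\<forall>z. \<exists>p. degree p \<le> d1 \<and> (\<forall>w. P z w = poly p w)" using jmul.IH by blast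
  obtain d2 where d2: "\<forall>z. \<exists>p. degree p \<le> d2 \<and> (\<forall>w. Q z w = poly p w)" using jmul.IH by blast
  show ?case
  proof (rule exI[of _ "d1 + d2"], rule allI)
    fix z
    obtain p1 where p1: "degree p1 \<le> d1" "\<forall>w. P z w = poly p1 w" using d1 by blast
    obtain p2 where p2: "degree p2 \<le> d2" "\<forall>w. Q z w = poly p2 w" using d2 by blast
    show "\<exists>p. degree p \<le> d1 + d2 \<and> (\<forall>w. P z w * Q z w = poly p w)"
      apply (rule exI[of _ "p1 * p2"])
      using p1 p2 degree_mult_le[of p1 p2] by auto
  qed
qed

lemma jpi_pf_w: "jpi P \<Longrightarrow> \<exists>p. \<forall>w. P z w = poly p w"
  using jpi_deg by blast

lemma jpi_pf_z: assumes "jpi P" shows "\<exists>p. \<forall>z. P z w = poly p z"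
proof -
  obtain p where "\<forall>z. (\<lambda>z w. P w z) w z = poly p z" using jpi_pf_w[OF jpi_swap[OF assms]] by blast
  then show ?thesis by auto
qed

lemma jpi_divw: "jpi P \<Longrightarrow> \<exists>T. jpi T \<and> (\<forall>z w. P z w = P z 0 + w * T z w)"
proof (induction rule: jpi.induct)
  case (jc c) show ?case using jpi.jc[of 0] by auto
next
  case jz show ?case using jpi.jc[of 0] by auto
next
  case jw show ?case using jpi.jc[of 1] by auto
next
  case (jadd P Q)
  obtain T1 where T1: "jpi T1" "\<forall>z w. P z w = P z 0 + w * T1 z w" using jadd.IH by blast
  obtain T2 where T2: "jpi T2" "\<forall>z w. Q z w = Q z 0 + w * T2 z w" using jadd.IH by blast
  show ?case
  proof (rule exI, rule conjI[OF jpi.jadd[OF T1(1) T2(1)]], intro allI)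
    fix z w
    show "P z w + Q z w = P z 0 + Q z 0 + w * (T1 z w + T2 z w)"
      using T1(2)[rule_format, of z w] T2(2)[rule_format, of z w] by (simp add: algebra_simps)
  qed
next
  case (jmul P Q)
  obtain T1 where T1: "jpi T1" "\<forall>z w. P z w = P z 0 + w * T1 z w" using jmul.IH by blast
  obtain T2 where T2: "jpi T2" "\<forall>z w. Q z w = Q z 0 + w * T2 z w" using jmul.IH by blast
  have J: "jpi (\<lambda>z w. T1 z w * Q z 0 + P z 0 * T2 z w + w * T1 z w * T2 z w)"
    using jpi.jadd[OF jpi.jadd[OF jpi.jmul[OF T1(1) jpi_w0[OF jmul.hyps(2)]] jpi.jmul[OF jpi_w0[OF jmul.hyps(1)] T2(1)]]
        jpi.jmul[OF jpi.jmul[OF jw T1(1)] T2(1)]] .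
  show ?case
  proof (rule exI, rule conjI[OF J], intro allI)
    fix z w
    have "P z w * Q z w = (P z 0 + w * T1 z w) * (Q z 0 + w * T2 z w)"
      using T1(2)[rule_format, of z w] T2(2)[rule_format, of z w] by simp
    then show "P z w * Q z w = P z 0 * Q z 0 + w * (T1 z w * Q z 0 + P z 0 * T2 z w + w * T1 z w * T2 z w)"
      by (simp add: algebra_simps)
  qed
qed

lemma pf_zero:
  fixes p :: "complex poly"
  assumes "\<forall>x. f x = poly p x" "infinite A" "\<forall>x\<in>A. f x = 0"
  shows "f x = 0"
proof -
  have "p = 0"
  proof (rule ccontr)
    assume "p \<noteq> 0"
    then have "finite {x. poly p x = 0}" by (rule poly_roots_finite)
    moreover have "A \<subseteq> {x. poly p x = 0}" using assms by auto
    ultimately show False using assms(2) finite_subset by blast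
  qed
  then show ?thesis using assms(1) by simp
qed

lemma jpi_zero:
  assumes "jpi Q" "infinite A" "infinite B" "\<forall>a\<in>A. \<forall>b\<in>B. Q a b = 0"
  shows "Q z w = 0"
proof -
  have h: "\<forall>b\<in>B. \<forall>z. Q z b = 0"
  proof (intro ballI allI)
    fix b z
    assume b: "b \<in> B"
    obtain p where "\<forall>z. Q z b = poly p z" using jpi_pf_z[OF assms(1)] by blast
    moreover have "\<forall>x\<in>A. Q x b = 0" using assms(4) b by auto
    ultimately show "Q z b = 0" using pf_zero[of "\<lambda>z. Q z b" p A z] assms(2) by blast
  qed
  obtain p where "\<forall>w. Q z w = poly p w" using jpi_pf_w[OF assms(1)] by blast
  moreover have "\<forall>x\<in>B. Q z x = 0" using h by auto
  ultimately show ?thesis using pf_zero[of "\<lambda>w. Q z w" p B w] assms(3) by blast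
qed

lemma infinite_nonzero: "infinite (UNIV - {0::complex})"
  using infinite_UNIV_char_0[where 'a=complex] by auto

lemma infinite_reals: "infinite (range complex_of_real)"
proof
  assume "finite (range complex_of_real)"
  then have "finite (UNIV::real set)"
    using finite_imageD[of complex_of_real UNIV] inj_of_real by (metis inj_def of_real_eq_iff)
  then show False using infinite_UNIV_char_0[where 'a=real] by simp
qed

lemma jpi_uniq:
  assumes "jpi P" "\<forall>z. P z (cnj z) = 0"
  shows "P z w = 0"
proof -
  define Q where "Q = (\<lambda>a b. P (a + \<i> * b) (a - \<i> * b))"
  have jA: "jpi (\<lambda>a b. a + \<i> * b)" by (intro jadd jmul jz jw jc)
  have jB: "jpi (\<lambda>a b. a - \<i> * b)" by (intro jpi_minus jmul jz jw jc)
  have jQ: "jpi Q" unfolding Q_def by (rule jpi_comp[OF assms(1) jA jB])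
  have "\<forall>a\<in>range complex_of_real. \<forall>b\<in>range complex_of_real. Q a b = 0"
  proof (intro ballI)
    fix a b assume "a \<in> range complex_of_real" "b \<in> range complex_of_real"
    then obtain x y where xy: "a = of_real x" "b = of_real y" by auto
    have "cnj (a + \<i> * b) = a - \<i> * b" using xy by simp
    then show "Q a b = 0" unfolding Q_def using assms(2) by metis
  qed
  then have "Q ((z + w)/2) ((z - w)/(2*\<i>)) = 0"
    using jpi_zero[OF jQ infinite_reals infinite_reals] by blast
  moreover have "(z + w)/2 + \<i> * ((z - w)/(2*\<i>)) = z" "(z + w)/2 - \<i> * ((z - w)/(2*\<i>)) = w"
    by (auto simp: field_simps)
  ultimately show ?thesis unfolding Q_def by simp
qed




definition phi :: "complex poly list \<Rightarrow> complex \<Rightarrow> complex \<Rightarrow> complex" where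
  "phi G z w = (\<Sum>g\<leftarrow>G. poly g z * poly (map_poly cnj g) w)"

lemma phi_Nil[simp]: "phi [] z w = 0" by (simp add: phi_def)
lemma phi_Cons[simp]: "phi (g#G) z w = poly g z * poly (map_poly cnj g) w + phi G z w"
  by (simp add: phi_def)

lemma jpi_phi: "jpi (phi G)"
proof (induction G)
  case Nil
  have "phi [] = (\<lambda>z w. 0)" by (auto simp: fun_eq_iff)
  then show ?case using jc[of 0] by simp
next
  case (Cons g G)
  have "jpi (\<lambda>z w. poly g z * poly (map_poly cnj g) w + phi G z w)"
    by (intro jadd jmul jpi_poly_z jpi_poly_w Cons.IH)
  moreover have "phi (g#G) = (\<lambda>z w. poly g z * poly (map_poly cnj g) w + phi G z w)"
    by (auto simp: fun_eq_iff simp del: poly_map_poly_cnj)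
  ultimately show ?case by simp
qed

lemma phi_diag: "phi G z (cnj z) = of_real (sqnorm G z)"
  by (induction G) (auto simp: sqnorm_def complex_norm_square[symmetric])

lemma sqnorm_nonneg: "sqnorm G z \<ge> 0"
  by (induction G) (auto simp: sqnorm_def)

lemma sqnorm0: "sqnorm G z = 0 \<Longrightarrow> \<forall>g\<in>set G. poly g z = 0"
proof (induction G)
  case Nil then show ?case by simp
next
  case (Cons g G)
  have e: "sqnorm (g#G) z = (cmod (poly g z))\<^sup>2 + sqnorm G z" by (simp add: sqnorm_def)
  have "(cmod (poly g z))\<^sup>2 \<ge> 0" by simp
  with sqnorm_nonneg[of G z] Cons.prems e have "(cmod (poly g z))\<^sup>2 = 0" "sqnorm G z = 0" by linarith+
  with Cons.IH show ?case by simp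
qed

lemma phi_shift: "\<forall>g\<in>set G. poly g 0 = 0 \<Longrightarrow> \<exists>G'. \<forall>z w. phi G z w = z * w * phi G' z w"
proof (induction G)
  case Nil then show ?case by (rule_tac x="[]" in exI) simp
next
  case (Cons g G)
  obtain G' where G': "\<forall>z w. phi G z w = z * w * phi G' z w" using Cons by auto
  obtain a q where g: "g = pCons a q" by (cases g)
  have "a = 0" using Cons.prems g by simp
  show ?case
  proof (rule exI[of _ "q # G'"], intro allI)
    fix z w
    show "phi (g # G) z w = z * w * phi (q # G') z w"
      using G' g \<open>a = 0\<close> by (simp add: algebra_simps)
  qed
qed

definition E :: "(nat \<Rightarrow> nat \<Rightarrow> complex) \<Rightarrow> nat \<Rightarrow> complex \<Rightarrow> complex \<Rightarrow> complex" where
  "E c N z w = (\<Sum>j<N. \<Sum>k<N. c j k * z ^ j * w ^ k)"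

lemma jpi_E: "jpi (E c N)"
proof -
  have "jpi (\<lambda>z w. \<Sum>j<N. \<Sum>k<N. c j k * z ^ j * w ^ k)"
    by (intro jpi_sum ballI jmul jc jpi_pow jz jw finite_lessThan)
  then show ?thesis unfolding E_def .
qed

lemma box_exists: "finite (S :: (nat \<times> nat) set) \<Longrightarrow> \<exists>N. S \<subseteq> {..<N} \<times> {..<N}"
proof -
  assume f: "finite S"
  obtain k1 where k1: "fst ` S \<subseteq> {..<k1}" using finite_nat_bounded[OF finite_imageI[OF f]] by blast
  obtain k2 where k2: "snd ` S \<subseteq> {..<k2}" using finite_nat_bounded[OF finite_imageI[OF f]] by blast
  show ?thesis
    apply (rule exI[of _ "max k1 k2"])
    using k1 k2 by force
qed

lemma heval_E:
  assumes "{(j,k). c j k \<noteq> 0} \<subseteq> {..<N} \<times> {..<N}"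
  shows "heval c z = E c N z (cnj z)"
proof -
  have "heval c z = (\<Sum>(j,k)\<in>{..<N} \<times> {..<N}. c j k * z ^ j * cnj z ^ k)"
    unfolding heval_def
    apply (rule sum.mono_neutral_left)
    using assms by auto
  also have "\<dots> = E c N z (cnj z)"
    unfolding E_def by (simp add: sum.cartesian_product)
  finally show ?thesis .
qed

lemma E_sym:
  assumes "\<forall>j k. c j k = cnj (c k j)"
  shows "E c N z w = cnj (E c N (cnj w) (cnj z))"
proof -
  have hc: "cnj (c j k) = c k j" for j k using assms by (metis complex_cnj_cnj)
  have "cnj (E c N (cnj w) (cnj z)) = (\<Sum>j<N. \<Sum>k<N. c k j * w ^ j * z ^ k)"
    by (simp add: E_def hc)
  also have "\<dots> = (\<Sum>k<N. \<Sum>j<N. c k j * w ^ j * z ^ k)" by (rule sum.swap)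
  also have "\<dots> = E c N z w" by (simp add: E_def mult_ac)
  finally show ?thesis by simp
qed

lemma E_w0: "E c N z 0 = poly (\<Sum>j<N. monom (c j 0) j) z"
proof (cases N)
  case 0 then show ?thesis by (simp add: E_def)
next
  case (Suc M)
  have "E c N z 0 = (\<Sum>j<N. c j 0 * z ^ j)"
    unfolding E_def Suc by (simp add: sum.lessThan_Suc_shift del: sum.lessThan_Suc)
  also have "\<dots> = poly (\<Sum>j<N. monom (c j 0) j) z"
    by (simp add: poly_sum poly_monom)
  finally show ?thesis .
qed

lemma coeff_E0: "k < N \<Longrightarrow> coeff (\<Sum>j<N. monom (c j 0) j) k = c k 0"
  by (simp add: coeff_sum coeff_monom)




lemma step:
  assumes jR: "jpi R" and R0: "R 0 0 = 0"
    and Rn: "\<forall>S. jpi S \<longrightarrow> (\<forall>z. R z 0 * S z 0 = 0) \<longrightarrow> (\<forall>z. S z 0 = 0)"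
    and jS: "jpi S" and sym: "\<forall>z w. S z w = cnj (S (cnj w) (cnj z))"
    and eq: "\<forall>z w. R z w * S z w = phi G z w"
  shows "\<exists>S' G'. jpi S' \<and> (\<forall>z w. S' z w = cnj (S' (cnj w) (cnj z)))
     \<and> (\<forall>z w. R z w * S' z w = phi G' z w) \<and> (\<forall>z w. S z w = z * w * S' z w)"
proof -
  have "phi G 0 0 = 0" using eq R0 by (metis mult_zero_left)
  then have "sqnorm G 0 = 0" using phi_diag[of G 0] by simp
  then have "\<forall>g\<in>set G. poly g 0 = 0" by (rule sqnorm0)
  then obtain G' where G': "\<forall>z w. phi G z w = z * w * phi G' z w" using phi_shift by blast
  have "\<forall>z. R z 0 * S z 0 = 0" using eq G' by simp
  then have Sz0: "\<forall>z. S z 0 = 0" using Rn jS by blast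
  have S0w: "S 0 w = 0" for w
  proof -
    have "S 0 w = cnj (S (cnj w) (cnj 0))" by (rule sym[rule_format])
    then show ?thesis using Sz0 by simp
  qed
  obtain T where jT: "jpi T" and T: "\<forall>z w. S z w = S z 0 + w * T z w"
    using jpi_divw[OF jS] by blast
  have T': "S z w = w * T z w" for z w using T[rule_format, of z w] Sz0 by simp
  have T0: "T 0 w = 0" for w
  proof -
    obtain p where p: "\<forall>w. T 0 w = poly p w" using jpi_pf_w[OF jT] by blast
    have "\<forall>x\<in>UNIV - {0}. T 0 x = 0"
    proof
      fix x assume "x \<in> UNIV - {0::complex}"
      then have "x \<noteq> 0" by auto
      moreover have "x * T 0 x = 0" using T'[of 0 x] S0w[of x] by simp
      ultimately show "T 0 x = 0" by simp
    qed
    then show ?thesis using pf_zero[of "\<lambda>w. T 0 w" p] p infinite_nonzero by blast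
  qed
  obtain U where jU: "jpi U" and U: "\<forall>z w. T w z = T 0 z + w * U z w"
    using jpi_divw[OF jpi_swap[OF jT]] by blast
  define S' where "S' = (\<lambda>z w. U w z)"
  have jS': "jpi S'" unfolding S'_def using jpi_swap[OF jU] .
  have SS': "S z w = z * w * S' z w" for z w
  proof -
    have "T z w = T 0 w + z * U w z" by (rule U[rule_format])
    then show ?thesis using T'[of z w] T0[of w] unfolding S'_def by (simp add: algebra_simps)
  qed
  have sym': "\<forall>z w. S' z w = cnj (S' (cnj w) (cnj z))"
  proof (intro allI)
    fix z w
    have H: "\<forall>a\<in>UNIV - {0}. \<forall>b\<in>UNIV - {0}. S' a b - cnj (S' (cnj b) (cnj a)) = 0"
    proof (intro ballI)
      fix a b :: complex assume "a \<in> UNIV - {0}" "b \<in> UNIV - {0}"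
      then have ab: "a \<noteq> 0" "b \<noteq> 0" by auto
      have "a * b * S' a b = S a b" using SS' by simp
      also have "\<dots> = cnj (S (cnj b) (cnj a))" by (rule sym[rule_format])
      also have "\<dots> = a * b * cnj (S' (cnj b) (cnj a))" using SS'[of "cnj b" "cnj a"] by simp
      finally have "a * b * S' a b = a * b * cnj (S' (cnj b) (cnj a))" .
      moreover have "a * b \<noteq> 0" using ab by simp
      ultimately have "S' a b = cnj (S' (cnj b) (cnj a))" using mult_left_cancel by blast
      then show "S' a b - cnj (S' (cnj b) (cnj a)) = 0" by simp
    qed
    have "(\<lambda>a b. S' a b - cnj (S' (cnj b) (cnj a))) z w = 0"
      by (rule jpi_zero[OF jpi_minus[OF jS' jpi_adj[OF jS']] infinite_nonzero infinite_nonzero]) (rule H)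
    then show "S' z w = cnj (S' (cnj w) (cnj z))" by (metis right_minus_eq)
  qed
  have eq': "\<forall>z w. R z w * S' z w = phi G' z w"
  proof (intro allI)
    fix z w
    have H: "\<forall>a\<in>UNIV - {0}. \<forall>b\<in>UNIV - {0}. R a b * S' a b - phi G' a b = 0"
    proof (intro ballI)
      fix a b :: complex assume "a \<in> UNIV - {0}" "b \<in> UNIV - {0}"
      then have ab: "a \<noteq> 0" "b \<noteq> 0" by auto
      have "a * b * (R a b * S' a b) = R a b * S a b" using SS' by simp
      also have "\<dots> = a * b * phi G' a b" using eq G' by simp
      finally have "a * b * (R a b * S' a b) = a * b * phi G' a b" .
      moreover have "a * b \<noteq> 0" using ab by simp
      ultimately have "R a b * S' a b = phi G' a b" using mult_left_cancel by blast
      then show "R a b * S' a b - phi G' a b = 0" by simp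
    qed
    have "(\<lambda>a b. R a b * S' a b - phi G' a b) z w = 0"
      by (rule jpi_zero[OF jpi_minus[OF jpi.jmul[OF jR jS'] jpi_phi] infinite_nonzero infinite_nonzero]) (rule H)
    then show "R z w * S' z w = phi G' z w" by (metis right_minus_eq)
  qed
  show ?thesis using jS' sym' eq' SS' by blast
qed




lemma iterate:
  assumes jR: "jpi R" and R0: "R 0 0 = 0"
    and Rn: "\<forall>S. jpi S \<longrightarrow> (\<forall>z. R z 0 * S z 0 = 0) \<longrightarrow> (\<forall>z. S z 0 = 0)"
    and jS: "jpi S0" and sym: "\<forall>z w. S0 z w = cnj (S0 (cnj w) (cnj z))"
    and eq: "\<forall>z w. R z w * S0 z w = phi F z w"
  shows "\<exists>S G. jpi S \<and> (\<forall>z w. S z w = cnj (S (cnj w) (cnj z)))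
     \<and> (\<forall>z w. R z w * S z w = phi G z w) \<and> (\<forall>z w. S0 z w = (z * w) ^ n * S z w)"
proof (induction n)
  case 0
  have "\<forall>z w. S0 z w = (z * w) ^ 0 * S0 z w" by simp
  then show ?case using jS sym eq by blast
next
  case (Suc n)
  then obtain S G where S: "jpi S" "\<forall>z w. S z w = cnj (S (cnj w) (cnj z))"
    "\<forall>z w. R z w * S z w = phi G z w" "\<forall>z w. S0 z w = (z * w) ^ n * S z w" by blast
  obtain S' G' where S': "jpi S'" "\<forall>z w. S' z w = cnj (S' (cnj w) (cnj z))"
    "\<forall>z w. R z w * S' z w = phi G' z w" "\<forall>z w. S z w = z * w * S' z w"
    using step[OF jR R0 Rn S(1,2,3)] by blast
  have "\<forall>z w. S0 z w = (z * w) ^ Suc n * S' z w"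
  proof (intro allI)
    fix z w
    have "S0 z w = (z * w) ^ n * S z w" by (rule S(4)[rule_format])
    also have "\<dots> = (z * w) ^ n * (z * w * S' z w)" using S'(4) by simp
    finally show "S0 z w = (z * w) ^ Suc n * S' z w" by (simp add: mult_ac)
  qed
  then show ?case using S' by blast
qed

theorem corollary4p1:
  assumes "r \<in> Qprime1"
    and "\<exists>k\<ge>1. r k 0 \<noteq> 0 \<or> r 0 k \<noteq> 0"
  shows "Re (heval r 0) > 0"
proof (rule ccontr)
  assume neg: "\<not> Re (heval r 0) > 0"
  from assms(1) obtain s F where r: "nonneg_herm r" and s: "nonneg_herm s"
    and sz: "\<exists>z. heval s z \<noteq> 0"
    and eqF: "\<forall>z. heval r z * heval s z = complex_of_real (sqnorm F z)"
    unfolding Qprime1_def by blast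
  have hr: "\<forall>j k. r j k = cnj (r k j)" and fr: "finite {(j, k). r j k \<noteq> 0}"
    using r unfolding nonneg_herm_def herm_sym_def bipoly_def by blast+
  have hs: "\<forall>j k. s j k = cnj (s k j)" and fs: "finite {(j, k). s j k \<noteq> 0}"
    using s unfolding nonneg_herm_def herm_sym_def bipoly_def by blast+
  have "Im (heval r 0) = 0" "Re (heval r 0) \<ge> 0" using r unfolding nonneg_herm_def by auto
  with neg have hr0: "heval r 0 = 0" by (simp add: complex_eq_iff)
  obtain Nr where Nr: "{(j, k). r j k \<noteq> 0} \<subseteq> {..<Nr} \<times> {..<Nr}" using box_exists[OF fr] by blast
  obtain Ns where Ns: "{(j, k). s j k \<noteq> 0} \<subseteq> {..<Ns} \<times> {..<Ns}" using box_exists[OF fs] by blast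
  define R where "R = E r Nr"
  define S0 where "S0 = E s Ns"
  have hR: "heval r z = R z (cnj z)" for z unfolding R_def by (rule heval_E[OF Nr])
  have hS: "heval s z = S0 z (cnj z)" for z unfolding S0_def by (rule heval_E[OF Ns])
  have jR: "jpi R" unfolding R_def by (rule jpi_E)
  have jS: "jpi S0" unfolding S0_def by (rule jpi_E)
  have R0: "R 0 0 = 0" using hR[of 0] hr0 by simp
  obtain k where k: "r k 0 \<noteq> 0"
  proof -
    obtain k where "r k 0 \<noteq> 0 \<or> r 0 k \<noteq> 0" using assms(2) by blast
    moreover have "r k 0 = cnj (r 0 k)" using hr by blast
    ultimately have "r k 0 \<noteq> 0" by auto
    then show ?thesis using that by blast
  qed
  have kN: "k < Nr" using Nr k by auto
  define p where "p = (\<Sum>j<Nr. monom (r j 0) j)"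
  have "coeff p k \<noteq> 0" unfolding p_def using coeff_E0[OF kN, of r] k by simp
  then have p0: "p \<noteq> 0" by auto
  have Rw0: "R z 0 = poly p z" for z unfolding R_def p_def by (rule E_w0)
  have Rn: "\<forall>S. jpi S \<longrightarrow> (\<forall>z. R z 0 * S z 0 = 0) \<longrightarrow> (\<forall>z. S z 0 = 0)"
  proof (intro allI impI)
    fix S z assume jS: "jpi S" and h: "\<forall>z. R z 0 * S z 0 = 0"
    obtain q where q: "\<forall>z. S z 0 = poly q z" using jpi_pf_z[OF jS] by blast
    have "\<forall>x. poly (p * q) x = 0" using h q Rw0 by simp
    then have "p * q = 0" using poly_all_0_iff_0 by blast
    then have "q = 0" using p0 by simp
    then show "S z 0 = 0" using q by simp
  qed
  have symS: "\<forall>z w. S0 z w = cnj (S0 (cnj w) (cnj z))"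
    unfolding S0_def using E_sym[OF hs] by blast
  have eq0: "\<forall>z w. R z w * S0 z w = phi F z w"
  proof (intro allI)
    fix z w
    have H: "\<forall>z. R z (cnj z) * S0 z (cnj z) - phi F z (cnj z) = 0"
      using eqF hR hS phi_diag by simp
    have "(\<lambda>z w. R z w * S0 z w - phi F z w) z w = 0"
      by (rule jpi_uniq[OF jpi_minus[OF jpi.jmul[OF jR jS] jpi_phi]]) (rule H)
    then show "R z w * S0 z w = phi F z w" by (metis right_minus_eq)
  qed
  obtain d where d: "\<forall>z. \<exists>p. degree p \<le> d \<and> (\<forall>w. S0 z w = poly p w)"
    using jpi_deg[OF jS] by blast
  obtain Sn G where Sn: "jpi Sn" "\<forall>z w. S0 z w = (z * w) ^ Suc d * Sn z w"
    using iterate[OF jR R0 Rn jS symS eq0, of "Suc d"] by blast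
  obtain z0 where z0: "S0 z0 (cnj z0) \<noteq> 0" using sz hS by auto
  have z0ne: "z0 \<noteq> 0" using z0 Sn(2) by auto
  obtain p0 where p0: "degree p0 \<le> d" "\<forall>w. S0 z0 w = poly p0 w" using d by blast
  obtain q where q: "\<forall>w. Sn z0 w = poly q w" using jpi_pf_w[OF Sn(1)] by blast
  have q0: "q \<noteq> 0" using z0 Sn(2) q by auto
  have "poly p0 = poly (smult (z0 ^ Suc d) (monom 1 (Suc d) * q))"
  proof
    fix w
    have "poly p0 w = (z0 * w) ^ Suc d * Sn z0 w" using p0(2) Sn(2) by metis
    then show "poly p0 w = poly (smult (z0 ^ Suc d) (monom 1 (Suc d) * q)) w"
      using q by (simp add: poly_monom power_mult_distrib mult_ac)
  qed
  then have "p0 = smult (z0 ^ Suc d) (monom 1 (Suc d) * q)" by (simp add: poly_eq_poly_eq_iff)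
  then have "degree p0 = Suc d + degree q"
    using z0ne q0 by (simp add: degree_mult_eq degree_monom_eq)
  then show False using p0(1) by simp
qed


end
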